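(* Let $X$ be a real Hilbert space, let $D$ be a nonempty subset of $X$, let $T\colon D\to X$, let $\alpha\in\,]0,+\infty[$, set $A=T^{-1}-\mathrm{Id}$ (so $T=J_A$) and $\rho=\tfrac{1}{2\alpha}-1>-1$. Then: (i) $T$ is $\alpha$-conically nonexpansive $\iff$ $A$ is $\rho$-comonotone. (ii) [$T$ is $\alpha$-conically nonexpansive and $D=X$] $\iff$ $A$ is maximally $\rho$-comonotone. (iii) $T$ is nonexpansive $\iff$ $A$ is $(-\tfrac12)$-comonotone. (iv) [$T$ is nonexpansive and $D=X$] $\iff$ $A$ is maximally $(-\tfrac12)$-comonotone. If moreover $\alpha\in\,]0,1[$, equivalently $\rho>-\tfrac12$, then also: (v) $T$ is $\alpha$-averaged $\iff$ $A$ is $\rho$-comonotone. (vi) [$T$ is $\alpha$-averaged and $D=X$] $\iff$ $A$ is maximally $\rho$-comonotone.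
   Context: For $T\colon D\to X$, $T^{-1}$ is the set-valued inverse and $J_A=(\mathrm{Id}+A)^{-1}$. A map $N\colon D\to X$ is nonexpansive if $\|Nx-Ny\|\le\|x-y\|$ for all $x,y\in D$. For $\alpha>0$, $T$ is $\alpha$-conically nonexpansive if $T=(1-\alpha)\mathrm{Id}+\alpha N$ for some nonexpansive $N\colon D\to X$; for $\alpha\in]0,1[$, $\alpha$-averaged means the same. For $\rho\in\mathbb R$, $A\colon X\rightrightarrows X$ is $\rho$-comonotone if $\langle x-y,u-v\rangle\ge\rho\|u-v\|^2$ for all $(x,u),(y,v)\in\operatorname{gra}A$; maximally $\rho$-comonotone if moreover no $\rho$-comonotone operator has a graph properly containing $\operatorname{gra}A$. *)

theory Defs
  imports "HOL-Analysis.Analysis"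
begin

text \<open>Set-valued operators X \<rightrightarrows> X are modelled as functions 'a \<Rightarrow> 'a set;
  single-valued maps T : D \<rightarrow> X as functions 'a \<Rightarrow> 'a together with the domain D.\<close>

definition gra :: "('a \<Rightarrow> 'a set) \<Rightarrow> ('a \<times> 'a) set" where
  "gra A = {(x, u). u \<in> A x}"

definition inv_op :: "'a set \<Rightarrow> ('a \<Rightarrow> 'a) \<Rightarrow> ('a \<Rightarrow> 'a set)" where
  "inv_op D T = (\<lambda>y. {x \<in> D. T x = y})"

definition minus_Id :: "('a::ab_group_add \<Rightarrow> 'a set) \<Rightarrow> ('a \<Rightarrow> 'a set)" where
  "minus_Id B = (\<lambda>y. {x - y | x. x \<in> B y})"

definition nonexpansive_on :: "'a set \<Rightarrow> ('a::real_normed_vector \<Rightarrow> 'a) \<Rightarrow> bool" where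
  "nonexpansive_on D N \<longleftrightarrow> (\<forall>x\<in>D. \<forall>y\<in>D. norm (N x - N y) \<le> norm (x - y))"

definition conically_nonexpansive_on :: "real \<Rightarrow> 'a set \<Rightarrow> ('a::real_normed_vector \<Rightarrow> 'a) \<Rightarrow> bool" where
  "conically_nonexpansive_on \<alpha> D T \<longleftrightarrow> 0 < \<alpha> \<and>
     (\<exists>N. nonexpansive_on D N \<and> (\<forall>x\<in>D. T x = (1 - \<alpha>) *\<^sub>R x + \<alpha> *\<^sub>R N x))"

definition averaged_on :: "real \<Rightarrow> 'a set \<Rightarrow> ('a::real_normed_vector \<Rightarrow> 'a) \<Rightarrow> bool" where
  "averaged_on \<alpha> D T \<longleftrightarrow> 0 < \<alpha> \<and> \<alpha> < 1 \<and>
     (\<exists>N. nonexpansive_on D N \<and> (\<forall>x\<in>D. T x = (1 - \<alpha>) *\<^sub>R x + \<alpha> *\<^sub>R N x))"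

definition comonotone :: "real \<Rightarrow> ('a::real_inner \<Rightarrow> 'a set) \<Rightarrow> bool" where
  "comonotone \<rho> A \<longleftrightarrow>
     (\<forall>x u y v. (x, u) \<in> gra A \<longrightarrow> (y, v) \<in> gra A \<longrightarrow> inner (x - y) (u - v) \<ge> \<rho> * (norm (u - v))\<^sup>2)"

definition maximally_comonotone :: "real \<Rightarrow> ('a::real_inner \<Rightarrow> 'a set) \<Rightarrow> bool" where
  "maximally_comonotone \<rho> A \<longleftrightarrow> comonotone \<rho> A \<and>
     \<not> (\<exists>B. comonotone \<rho> B \<and> gra A \<subset> gra B)"

end

theory Submission
  imports Defs
begin

lemma wsum_sq:
  fixes a :: "'i \<Rightarrow> 'a::real_inner"
  assumes "finite J" "sum \<mu> J = 1"
  shows "(\<Sum>i\<in>J. \<mu> i * (norm (v - a i))\<^sup>2) =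
    (norm v)\<^sup>2 - 2 * inner v (\<Sum>i\<in>J. \<mu> i *\<^sub>R a i) + (\<Sum>i\<in>J. \<mu> i * (norm (a i))\<^sup>2)"
proof -
  have "(\<Sum>i\<in>J. \<mu> i * (norm (v - a i))\<^sup>2) =
     (\<Sum>i\<in>J. \<mu> i * (norm v)\<^sup>2 - 2 * (\<mu> i * inner v (a i)) + \<mu> i * (norm (a i))\<^sup>2)"
    by (intro sum.cong refl) (simp add: power2_norm_eq_inner inner_diff_left inner_diff_right inner_commute algebra_simps)
  also have "\<dots> = (norm v)\<^sup>2 * sum \<mu> J - 2 * (\<Sum>i\<in>J. \<mu> i * inner v (a i)) + (\<Sum>i\<in>J. \<mu> i * (norm (a i))\<^sup>2)"
    by (simp add: sum.distrib sum_subtractf sum_distrib_left sum_distrib_right mult.commute)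
  also have "(\<Sum>i\<in>J. \<mu> i * inner v (a i)) = inner v (\<Sum>i\<in>J. \<mu> i *\<^sub>R a i)"
    by (simp add: inner_sum_right)
  finally show ?thesis using assms by simp
qed

lemma dsum_sq:
  fixes a :: "'i \<Rightarrow> 'a::real_inner"
  assumes "finite J" "sum \<mu> J = 1"
  shows "(\<Sum>i\<in>J. \<Sum>j\<in>J. \<mu> i * \<mu> j * (norm (a i - a j))\<^sup>2) =
    2 * ((\<Sum>i\<in>J. \<mu> i * (norm (a i))\<^sup>2) - (norm (\<Sum>i\<in>J. \<mu> i *\<^sub>R a i))\<^sup>2)"
proof -
  define abar where "abar = (\<Sum>i\<in>J. \<mu> i *\<^sub>R a i)"
  define S where "S = (\<Sum>i\<in>J. \<mu> i * (norm (a i))\<^sup>2)"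
  have "(\<Sum>i\<in>J. \<Sum>j\<in>J. \<mu> i * \<mu> j * (norm (a i - a j))\<^sup>2) =
     (\<Sum>i\<in>J. \<mu> i * (\<Sum>j\<in>J. \<mu> j * (norm (a i - a j))\<^sup>2))"
    by (simp add: sum_distrib_left mult.assoc)
  also have "\<dots> = (\<Sum>i\<in>J. \<mu> i * ((norm (a i))\<^sup>2 - 2 * inner (a i) abar + S))"
    by (intro sum.cong refl arg_cong[where f="\<lambda>t. \<mu> _ * t"]) (simp add: wsum_sq[OF assms] abar_def S_def)
  also have "\<dots> = S - 2 * (\<Sum>i\<in>J. \<mu> i * inner (a i) abar) + S * sum \<mu> J"
  proof -
    have "(\<Sum>i\<in>J. \<mu> i * ((norm (a i))\<^sup>2 - 2 * inner (a i) abar + S)) =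
      (\<Sum>i\<in>J. \<mu> i * (norm (a i))\<^sup>2) - (\<Sum>i\<in>J. 2 * (\<mu> i * inner (a i) abar)) + (\<Sum>i\<in>J. \<mu> i * S)"
      by (simp add: algebra_simps sum.distrib sum_subtractf)
    also have "\<dots> = S - 2 * (\<Sum>i\<in>J. \<mu> i * inner (a i) abar) + S * sum \<mu> J"
      by (simp add: S_def sum_distrib_left[symmetric] sum_distrib_right[symmetric] mult.commute)
    finally show ?thesis .
  qed
  also have "(\<Sum>i\<in>J. \<mu> i * inner (a i) abar) = (norm abar)\<^sup>2"
    by (simp add: power2_norm_eq_inner abar_def inner_sum_left)
  finally show ?thesis using assms by (simp add: abar_def S_def)
qed

lemma kirsz_ineq:
  fixes x y :: "'i \<Rightarrow> 'a::real_inner"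
  assumes "finite J" "\<forall>i\<in>J. 0 \<le> \<mu> i" "sum \<mu> J = 1"
    and ne: "\<forall>i\<in>J. \<forall>j\<in>J. norm (y i - y j) \<le> norm (x i - x j)"
  shows "(\<Sum>i\<in>J. \<mu> i * (norm ((\<Sum>j\<in>J. \<mu> j *\<^sub>R y j) - y i))\<^sup>2) \<le> (\<Sum>i\<in>J. \<mu> i * (norm (z - x i))\<^sup>2)"
proof -
  define yb where "yb = (\<Sum>j\<in>J. \<mu> j *\<^sub>R y j)"
  define xb where "xb = (\<Sum>j\<in>J. \<mu> j *\<^sub>R x j)"
  have "(\<Sum>i\<in>J. \<mu> i * (norm (yb - y i))\<^sup>2) = (\<Sum>i\<in>J. \<mu> i * (norm (y i))\<^sup>2) - (norm yb)\<^sup>2"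
    using wsum_sq[OF assms(1,3), of yb y] by (simp add: yb_def power2_norm_eq_inner)
  also have "\<dots> = (\<Sum>i\<in>J. \<Sum>j\<in>J. \<mu> i * \<mu> j * (norm (y i - y j))\<^sup>2) / 2"
    using dsum_sq[OF assms(1,3), of y] by (simp add: yb_def)
  also have "\<dots> \<le> (\<Sum>i\<in>J. \<Sum>j\<in>J. \<mu> i * \<mu> j * (norm (x i - x j))\<^sup>2) / 2"
  proof -
    have "(\<Sum>i\<in>J. \<Sum>j\<in>J. \<mu> i * \<mu> j * (norm (y i - y j))\<^sup>2) \<le> (\<Sum>i\<in>J. \<Sum>j\<in>J. \<mu> i * \<mu> j * (norm (x i - x j))\<^sup>2)"
    proof (intro sum_mono)
      fix i j assume "i \<in> J" "j \<in> J"
      then show "\<mu> i * \<mu> j * (norm (y i - y j))\<^sup>2 \<le> \<mu> i * \<mu> j * (norm (x i - x j))\<^sup>2"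
        using ne assms(2) by (intro mult_left_mono power_mono) auto
    qed
    then show ?thesis by simp
  qed
  also have "\<dots> = (\<Sum>i\<in>J. \<mu> i * (norm (x i))\<^sup>2) - (norm xb)\<^sup>2"
    using dsum_sq[OF assms(1,3), of x] by (simp add: xb_def)
  also have "\<dots> \<le> (norm (z - xb))\<^sup>2 + ((\<Sum>i\<in>J. \<mu> i * (norm (x i))\<^sup>2) - (norm xb)\<^sup>2)"
    by simp
  also have "\<dots> = (\<Sum>i\<in>J. \<mu> i * (norm (z - x i))\<^sup>2)"
    using wsum_sq[OF assms(1,3), of z x]
    by (simp add: xb_def power2_norm_eq_inner inner_diff_left inner_diff_right inner_commute algebra_simps)
  finally show ?thesis by (simp add: yb_def)
qed

lemma par_mid:
  fixes p q :: "'a::real_inner"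
  shows "(norm ((1/2) *\<^sub>R (p + q)))\<^sup>2 = ((norm p)\<^sup>2 + (norm q)\<^sup>2)/2 - (norm (p - q))\<^sup>2/4"
  by (simp add: power2_norm_eq_inner inner_add_left inner_add_right inner_diff_left inner_diff_right inner_commute algebra_simps) (simp add: field_simps)

lemma cauchy_sq:
  fixes X :: "nat \<Rightarrow> 'a::real_normed_vector"
  assumes "\<And>m n. n \<le> m \<Longrightarrow> (norm (X m - X n))\<^sup>2 \<le> c / (real n + 1)"
  shows "Cauchy X"
proof (rule CauchyI)
  fix e :: real assume e: "0 < e"
  obtain M :: nat where M: "c / e\<^sup>2 < real M" using reals_Archimedean2 by blast
  have key: "norm (X m - X n) < e" if "n \<le> m" "M \<le> n" for m n
  proof -
    have "c / (real n + 1) < e\<^sup>2"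
    proof -
      have "c < e\<^sup>2 * real M" using M e by (simp add: field_simps)
      also have "\<dots> \<le> e\<^sup>2 * (real n + 1)" using that by (intro mult_left_mono) auto
      finally show ?thesis by (simp add: field_simps)
    qed
    then have "(norm (X m - X n))\<^sup>2 < e\<^sup>2" using assms[OF that(1)] by linarith
    then show ?thesis using e by (simp add: power_less_imp_less_base)
  qed
  show "\<exists>M. \<forall>m\<ge>M. \<forall>n\<ge>M. norm (X m - X n) < e"
  proof (intro exI allI impI)
    fix m n assume "M \<le> m" "M \<le> n"
    show "norm (X m - X n) < e"
    proof (cases "n \<le> m")
      case True then show ?thesis using key \<open>M \<le> n\<close> by auto
    next
      case False then show ?thesis using key[of m n] \<open>M \<le> m\<close> by (simp add: norm_minus_commute)
    qed
  qed
qed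

lemma min_norm_ineq:
  fixes K :: "'a::real_inner set"
  assumes "convex K" "k \<in> K" "\<forall>y\<in>K. norm k \<le> norm y" "a \<in> K"
  shows "(norm k)\<^sup>2 \<le> inner a k"
proof (rule ccontr)
  assume "\<not> ?thesis"
  then have c: "inner k (a - k) < 0" by (simp add: inner_diff_right power2_norm_eq_inner inner_commute)
  define q where "q = (norm (a - k))\<^sup>2"
  have q: "0 < q" using c unfolding q_def by (cases "a = k") auto
  define t where "t = min 1 (- inner k (a - k) / q)"
  have t: "0 < t" "t \<le> 1" "t * q \<le> - inner k (a - k)" using c q
    by (auto simp: t_def min_def field_simps)
  have "k + t *\<^sub>R (a - k) = (1 - t) *\<^sub>R k + t *\<^sub>R a" by (simp add: algebra_simps)
  also have "\<dots> \<in> K" using assms(1,2,4) t by (intro convexD) auto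
  finally have "norm k \<le> norm (k + t *\<^sub>R (a - k))" using assms(3) by blast
  then have "(norm k)\<^sup>2 \<le> (norm (k + t *\<^sub>R (a - k)))\<^sup>2" by (simp add: power_mono)
  also have "\<dots> = (norm k)\<^sup>2 + t * (2 * inner k (a - k) + t * q)"
    by (simp add: q_def power2_norm_eq_inner inner_add_left inner_add_right inner_commute algebra_simps)
  finally have "0 \<le> t * (2 * inner k (a - k) + t * q)" by simp
  moreover have "2 * inner k (a - k) + t * q < 0" using t c by linarith
  ultimately show False using t by (simp add: mult_less_0_iff zero_le_mult_iff)
qed

lemma sq_line:
  fixes p k :: "'a::real_inner"
  shows "(norm (p - t *\<^sub>R k))\<^sup>2 = (norm p)\<^sup>2 - 2 * t * inner p k + t\<^sup>2 * (norm k)\<^sup>2"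
  unfolding power2_norm_eq_inner by (simp add: inner_diff_left inner_diff_right inner_commute algebra_simps power2_eq_square)

lemma lim_n1: "(\<lambda>n. 1 / (real n + 1)) \<longlonglongrightarrow> 0"
  using LIMSEQ_inverse_real_of_nat by (simp add: divide_inverse add.commute)

lemma kirsz_opt:
  fixes N :: "'a::real_inner \<Rightarrow> 'a"
  assumes fin: "finite S" "S \<noteq> {}"
    and ne: "\<forall>x\<in>S. \<forall>y\<in>S. norm (N x - N y) \<le> norm (x - y)"
    and F_def: "F = (\<lambda>v. Max ((\<lambda>x. (norm (v - N x))\<^sup>2 - (norm (z - x))\<^sup>2) ` S))"
    and min: "\<forall>v. F w \<le> F v"
  shows "F w \<le> 0"
proof (rule ccontr)
  assume pos: "\<not> F w \<le> 0"
  define f where "f x v = (norm (v - N x))\<^sup>2 - (norm (z - x))\<^sup>2" for x v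
  have Fge: "f x v \<le> F v" if "x \<in> S" for x v
    using fin that unfolding F_def f_def by (intro Max_ge) auto
  have Fle: "F v < c \<longleftrightarrow> (\<forall>x\<in>S. f x v < c)" for v c
    using fin unfolding F_def f_def by (subst Max_less_iff) auto
  have Fin: "\<exists>x\<in>S. f x v = F v" for v
  proof -
    have "F v \<in> (\<lambda>x. f x v) ` S" using fin unfolding F_def f_def by (intro Max_in) auto
    then show ?thesis by auto
  qed
  define I where "I = {x\<in>S. f x w = F w}"
  have I: "finite I" "I \<noteq> {}" "I \<subseteq> S" using fin Fin[of w] by (auto simp: I_def)
  define P where "P = (\<lambda>x. w - N x) ` I"
  define K where "K = convex hull P"
  have Kc: "compact K" "K \<noteq> {}" "convex K" using I by (auto simp: K_def P_def finite_imp_compact_convex_hull)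
  obtain k where k: "k \<in> K" "\<forall>y\<in>K. norm k \<le> norm y"
    using continuous_attains_inf[OF Kc(1,2), of norm] by (auto intro: continuous_intros)
  show False
  proof (cases "k = 0")
    case True
    then have "0 \<in> convex hull P" using k by (simp add: K_def)
    then obtain n u xx where u: "\<forall>i\<in>{1::nat..n}. 0 \<le> u i \<and> xx i \<in> P" "sum u {1..n} = 1"
      "(\<Sum>i = 1..n. u i *\<^sub>R xx i) = 0"
      unfolding convex_hull_indexed by blast
    define xi where "xi i = (SOME x. x \<in> I \<and> xx i = w - N x)" for i
    have xi: "xi i \<in> I \<and> xx i = w - N (xi i)" if "i \<in> {1..n}" for i
    proof -
      have "\<exists>x. x \<in> I \<and> xx i = w - N x" using u(1) that by (auto simp: P_def)
      then show ?thesis unfolding xi_def by (rule someI_ex)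
    qed
    have "(\<Sum>i = 1..n. u i *\<^sub>R (w - N (xi i))) = 0" using u(3) xi by (metis (no_types, lifting) sum.cong)
    then have "(\<Sum>i = 1..n. u i *\<^sub>R w) - (\<Sum>i = 1..n. u i *\<^sub>R N (xi i)) = 0"
      by (simp add: scaleR_diff_right sum_subtractf)
    then have wsum: "w = (\<Sum>i = 1..n. u i *\<^sub>R N (xi i))"
      using u(2) by (simp add: scaleR_sum_left[symmetric])
    have "(\<Sum>i = 1..n. u i * (norm ((\<Sum>j = 1..n. u j *\<^sub>R N (xi j)) - N (xi i)))\<^sup>2)
        \<le> (\<Sum>i = 1..n. u i * (norm (z - xi i))\<^sup>2)"
    proof (intro kirsz_ineq)
      have xiS: "\<forall>i\<in>{1..n}. xi i \<in> S" using xi I(3) by blast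
      then show "\<forall>i\<in>{1..n}. \<forall>j\<in>{1..n}. norm (N (xi i) - N (xi j)) \<le> norm (xi i - xi j)"
        using ne by blast
    qed (use u in auto)
    then have "(\<Sum>i = 1..n. u i * (norm (w - N (xi i)))\<^sup>2) - (\<Sum>i = 1..n. u i * (norm (z - xi i))\<^sup>2) \<le> 0"
      using wsum by simp
    then have "(\<Sum>i = 1..n. u i * f (xi i) w) \<le> 0"
      by (simp add: f_def right_diff_distrib sum_subtractf)
    moreover have "(\<Sum>i = 1..n. u i * f (xi i) w) = (\<Sum>i = 1..n. u i * F w)"
      using xi by (intro sum.cong refl) (auto simp: I_def)
    moreover have "(\<Sum>i = 1..n. u i * F w) = F w" using u(2) by (simp add: sum_distrib_right[symmetric])
    ultimately show False using pos by simp
  next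
    case False
    then have kpos: "0 < (norm k)\<^sup>2" by simp
    have act: "(norm k)\<^sup>2 \<le> inner (w - N x) k" if "x \<in> I" for x
      using min_norm_ineq[OF Kc(3) k] that by (auto simp: K_def P_def intro: hull_inc)
    define g where "g x t = f x (w - t *\<^sub>R k)" for x and t :: real
    have gexp: "g x t = f x w - 2 * t * inner (w - N x) k + t\<^sup>2 * (norm k)\<^sup>2" for x t
    proof -
      have e: "w - t *\<^sub>R k - N x = (w - N x) - t *\<^sub>R k" by simp
      show ?thesis unfolding g_def f_def e sq_line by simp
    qed
    have ev: "eventually (\<lambda>t. g x t < F w) (at_right 0)" if "x \<in> S" for x
    proof (cases "x \<in> I")
      case True
      have "g x t < F w" if "0 < t" "t < 1" for t
      proof -
        have "g x t \<le> F w - 2 * t * (norm k)\<^sup>2 + t\<^sup>2 * (norm k)\<^sup>2"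
          using act[OF True] True that unfolding gexp by (auto simp: I_def intro!: mult_left_mono)
        also have "\<dots> = F w - t * (2 - t) * (norm k)\<^sup>2" by (simp add: algebra_simps power2_eq_square)
        also have "\<dots> < F w" using that kpos by simp
        finally show ?thesis .
      qed
      then show ?thesis using eventually_at_right_real[of 0 1] by (auto elim: eventually_mono)
    next
      case False
      then have lt: "f x w < F w" using Fge[OF that, of w] that by (auto simp: I_def)
      have "((\<lambda>t. g x t) \<longlongrightarrow> f x w - 2 * 0 * inner (w - N x) k + 0\<^sup>2 * (norm k)\<^sup>2) (at_right 0)"
        unfolding gexp by (intro tendsto_intros)
      then have "((\<lambda>t. g x t) \<longlongrightarrow> f x w) (at_right 0)" by simp
      then show ?thesis using lt by (rule order_tendstoD)
    qed
    have "eventually (\<lambda>t. \<forall>x\<in>S. g x t < F w) (at_right 0)"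
      using ev fin(1) by (simp add: eventually_ball_finite)
    then obtain t where "\<forall>x\<in>S. g x t < F w"
      using eventually_happens[of _ "at_right (0::real)"] by auto
    then have "F (w - t *\<^sub>R k) < F w" using Fle unfolding g_def by auto
    then show False using min by (meson not_le)
  qed
qed

lemma kirsz_finite:
  fixes N :: "'a::{real_inner,complete_space} \<Rightarrow> 'a"
  assumes fin: "finite S"
    and ne: "\<forall>x\<in>S. \<forall>y\<in>S. norm (N x - N y) \<le> norm (x - y)"
  shows "\<exists>w. \<forall>x\<in>S. norm (w - N x) \<le> norm (z - x)"
proof (cases "S = {}")
  case True then show ?thesis by auto
next
  case False
  define f where "f x v = (norm (v - N x))\<^sup>2 - (norm (z - x))\<^sup>2" for x v
  define F where "F = (\<lambda>v. Max ((\<lambda>x. (norm (v - N x))\<^sup>2 - (norm (z - x))\<^sup>2) ` S))"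
  have Fge: "f x v \<le> F v" if "x \<in> S" for x v
    using fin that unfolding F_def f_def by (intro Max_ge) auto
  have Fle: "F v \<le> c \<longleftrightarrow> (\<forall>x\<in>S. f x v \<le> c)" for v c
    using fin False unfolding F_def f_def by (subst Max_le_iff) auto
  obtain x0 where x0: "x0 \<in> S" using False by auto
  have bdd: "bdd_below (range F)"
  proof
    fix y assume "y \<in> range F"
    then obtain v where "y = F v" by auto
    moreover have "- (norm (z - x0))\<^sup>2 \<le> f x0 v" by (simp add: f_def)
    ultimately show "- (norm (z - x0))\<^sup>2 \<le> y" using Fge[OF x0, of v] by linarith
  qed
  define m where "m = Inf (range F)"
  have mle: "m \<le> F v" for v unfolding m_def using bdd by (intro cInf_lower) auto
  have "\<exists>a. F a < m + 1 / (real n + 1)" for n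
  proof -
    have "Inf (range F) < m + 1 / (real n + 1)" by (simp add: m_def add_pos_pos)
    then show ?thesis using cInf_lessD[of "range F"] by auto
  qed
  then obtain a where a: "\<And>n. F (a n) < m + 1 / (real n + 1)" by metis
  have mid: "(norm (b - c))\<^sup>2 \<le> 2 * (F b + F c) - 4 * m" for b c
  proof -
    have "F ((1/2) *\<^sub>R (b + c)) \<le> (F b + F c)/2 - (norm (b - c))\<^sup>2/4"
      unfolding Fle
    proof
      fix x assume x: "x \<in> S"
      have "f x ((1/2) *\<^sub>R (b + c)) = (f x b + f x c)/2 - (norm (b - c))\<^sup>2/4"
      proof -
        have "(1/2) *\<^sub>R (b + c) - N x = (1/2) *\<^sub>R ((b - N x) + (c - N x))"
          by (simp add: algebra_simps) (metis field_sum_of_halves scaleR_add_left scaleR_one)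
        then show ?thesis unfolding f_def using par_mid[of "b - N x" "c - N x"] by (simp add: algebra_simps)
      qed
      also have "\<dots> \<le> (F b + F c)/2 - (norm (b - c))\<^sup>2/4" using Fge[OF x, of b] Fge[OF x, of c] by simp
      finally show "f x ((1/2) *\<^sub>R (b + c)) \<le> (F b + F c)/2 - (norm (b - c))\<^sup>2/4" .
    qed
    with mle[of "(1/2) *\<^sub>R (b + c)"] show ?thesis by linarith
  qed
  have "Cauchy a"
  proof (rule cauchy_sq[where c=4])
    fix p q :: nat assume "q \<le> p"
    have "1 / (real p + 1) \<le> 1 / (real q + 1)" using \<open>q \<le> p\<close> by (simp add: frac_le)
    then show "(norm (a p - a q))\<^sup>2 \<le> 4 / (real q + 1)"
      using mid[of "a p" "a q"] a[of p] a[of q] by simp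
  qed
  then obtain w where w: "a \<longlonglongrightarrow> w" using Cauchy_convergent_iff convergent_def by blast
  have "f x w \<le> m" if x: "x \<in> S" for x
  proof -
    have l1: "(\<lambda>n. f x (a n)) \<longlonglongrightarrow> f x w" unfolding f_def by (intro tendsto_intros w)
    have l2: "(\<lambda>n. m + 1 / (real n + 1)) \<longlonglongrightarrow> m + 0"
      by (intro tendsto_intros lim_n1)
    have "f x w \<le> m + 0"
    proof (rule LIMSEQ_le[OF l1 l2])
      show "\<exists>N. \<forall>n\<ge>N. f x (a n) \<le> m + 1 / (real n + 1)"
        using Fge[OF x] a by (meson less_imp_le order.trans)
    qed
    then show ?thesis by simp
  qed
  then have Fw: "F w \<le> m" using Fle by auto
  have "F w \<le> 0"
    using kirsz_opt[OF fin False ne F_def] Fw mle by (meson order.trans)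
  then have "\<forall>x\<in>S. f x w \<le> 0" using Fle by auto
  then show ?thesis unfolding f_def by (auto intro: power2_le_imp_le)
qed

lemma lin8: "(a::real) \<le> (x + y)/2 - z/4 \<Longrightarrow> x \<le> d + e \<Longrightarrow> y \<le> d+e \<Longrightarrow> d - e \<le> a \<Longrightarrow> z \<le> 8*e"
  by (simp add: field_simps)

lemma kirsz:
  fixes N :: "'a::{real_inner,complete_space} \<Rightarrow> 'a"
  assumes ne: "\<forall>x\<in>D. \<forall>y\<in>D. norm (N x - N y) \<le> norm (x - y)"
  shows "\<exists>w. \<forall>x\<in>D. norm (w - N x) \<le> norm (z - x)"
proof (cases "D = {}")
  case True then show ?thesis by auto
next
  case False
  then obtain x0 where x0: "x0 \<in> D" by auto
  define G where "G S = {p. \<forall>x\<in>insert x0 S. norm (p - N x) \<le> norm (z - x)}" for S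
  define \<delta> where "\<delta> S = Inf ((\<lambda>p. (norm p)\<^sup>2) ` G S)" for S
  define R where "R = (norm (N x0) + norm (z - x0))\<^sup>2"
  have Gne: "G S \<noteq> {}" if "finite S" "S \<subseteq> D" for S
  proof -
    have "\<forall>x\<in>insert x0 S. \<forall>y\<in>insert x0 S. norm (N x - N y) \<le> norm (x - y)"
      using ne x0 that by blast
    from kirsz_finite[OF _ this, of z] that show ?thesis by (auto simp: G_def)
  qed
  have Gbd: "(norm p)\<^sup>2 \<le> R" if "p \<in> G S" for p S
  proof -
    have "norm (p - N x0) \<le> norm (z - x0)" using that by (auto simp: G_def)
    then have "norm p \<le> norm (N x0) + norm (z - x0)" using norm_triangle_sub[of p "N x0"] by linarith
    then show ?thesis unfolding R_def by (intro power_mono) auto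
  qed
  have Gmono: "G S' \<subseteq> G S" if "S \<subseteq> S'" for S S' using that by (auto simp: G_def)
  have Gconv: "(1/2) *\<^sub>R (p + q) \<in> G S" if "p \<in> G S" "q \<in> G S" for p q S
    unfolding G_def
  proof (intro CollectI ballI)
    fix x assume x: "x \<in> insert x0 S"
    have "(1/2) *\<^sub>R (p + q) - N x = (1/2) *\<^sub>R ((p - N x) + (q - N x))"
      by (simp add: algebra_simps) (metis field_sum_of_halves scaleR_add_left scaleR_one)
    then have "norm ((1/2) *\<^sub>R (p + q) - N x) \<le> (1/2) * (norm (p - N x) + norm (q - N x))"
      by (simp add: norm_triangle_ineq)
    also have "\<dots> \<le> (1/2) * (norm (z - x) + norm (z - x))"
      using that x by (intro mult_left_mono add_mono) (auto simp: G_def)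
    finally show "norm ((1/2) *\<^sub>R (p + q) - N x) \<le> norm (z - x)" by simp
  qed
  have bddG: "bdd_below ((\<lambda>p. (norm p)\<^sup>2) ` G S)" for S
    by (rule bdd_belowI[of _ 0]) auto
  have \<delta>le: "\<delta> S \<le> (norm p)\<^sup>2" if "p \<in> G S" for p S
    unfolding \<delta>_def using that bddG by (intro cInf_lower) auto
  have \<delta>lt: "\<exists>p\<in>G S. (norm p)\<^sup>2 < \<delta> S + e" if "finite S" "S \<subseteq> D" "0 < e" for S e
  proof -
    have "Inf ((\<lambda>p. (norm p)\<^sup>2) ` G S) < \<delta> S + e" using that by (simp add: \<delta>_def)
    from cInf_lessD[OF _ this] Gne[OF that(1,2)] show ?thesis by auto
  qed
  have \<delta>mono: "\<delta> S \<le> \<delta> S'" if "finite S'" "S' \<subseteq> D" "S \<subseteq> S'" for S S'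
    unfolding \<delta>_def using Gne[OF that(1,2)] Gmono[OF that(3)] bddG
    by (intro cInf_superset_mono) auto
  have \<delta>R: "\<delta> S \<le> R" if "finite S" "S \<subseteq> D" for S
  proof -
    from Gne[OF that] obtain p where "p \<in> G S" by auto
    then show ?thesis using \<delta>le Gbd by (meson order.trans)
  qed
  define d where "d = Sup (\<delta> ` {S. finite S \<and> S \<subseteq> D})"
  have bddd: "bdd_above (\<delta> ` {S. finite S \<and> S \<subseteq> D})"
    using \<delta>R by (intro bdd_aboveI[of _ R]) auto
  have \<delta>d: "\<delta> S \<le> d" if "finite S" "S \<subseteq> D" for S
    unfolding d_def using that bddd by (intro cSup_upper) auto
  have "\<exists>S. finite S \<and> S \<subseteq> D \<and> d - 1 / (real n + 1) < \<delta> S" for n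
  proof -
    have "d - 1 / (real n + 1) < Sup (\<delta> ` {S. finite S \<and> S \<subseteq> D})" by (simp add: d_def)
    from less_cSupD[OF _ this] show ?thesis by auto
  qed
  then obtain Sq where Sq: "\<And>n. finite (Sq n) \<and> Sq n \<subseteq> D \<and> d - 1 / (real n + 1) < \<delta> (Sq n)" by metis
  define T where "T n = (\<Union>k\<le>n. Sq k)" for n
  have T: "finite (T n)" "T n \<subseteq> D" for n using Sq by (auto simp: T_def)
  have Tmono: "T n \<subseteq> T m" if "n \<le> m" for n m using that by (force simp: T_def)
  have Td: "d - 1 / (real n + 1) < \<delta> (T n)" for n
    using Sq[of n] \<delta>mono[OF T, of "Sq n" n] by (force simp: T_def)
  have key: "(norm (p - q))\<^sup>2 \<le> 8 * e"
    if "finite S" "S \<subseteq> D" "p \<in> G S" "q \<in> G S" "(norm p)\<^sup>2 \<le> d + e" "(norm q)\<^sup>2 \<le> d + e" "d - e \<le> \<delta> S"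
    for p q S e
  proof -
    have "\<delta> S \<le> (norm ((1/2) *\<^sub>R (p + q)))\<^sup>2" using Gconv[OF that(3,4)] \<delta>le by blast
    then have "\<delta> S \<le> ((norm p)\<^sup>2 + (norm q)\<^sup>2)/2 - (norm (p - q))\<^sup>2/4" using par_mid[of p q] by simp
    from lin8[OF this that(5,6,7)] show ?thesis .
  qed
  have "\<exists>p\<in>G (T n). (norm p)\<^sup>2 < \<delta> (T n) + 1 / (real n + 1)" for n
    using \<delta>lt[OF T] by simp
  then obtain pp where pp: "\<And>n. pp n \<in> G (T n) \<and> (norm (pp n))\<^sup>2 < \<delta> (T n) + 1 / (real n + 1)" by metis
  have ppd: "(norm (pp m))\<^sup>2 \<le> d + 1 / (real n + 1)" if "n \<le> m" for n m
  proof -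
    have "1 / (real m + 1) \<le> 1 / (real n + 1)" using that by (simp add: frac_le)
    then show ?thesis using pp[of m] \<delta>d[OF T, of m] by linarith
  qed
  have "Cauchy pp"
  proof (rule cauchy_sq[where c=8])
    fix m n :: nat assume "n \<le> m"
    have "(norm (pp m - pp n))\<^sup>2 \<le> 8 * (1 / (real n + 1))"
      using key[where S="T n" and p="pp m" and q="pp n" and e="1 / (real n + 1)", OF T(1) T(2)] pp[of m] pp[of n] Gmono[OF Tmono[OF \<open>n \<le> m\<close>]]
        ppd[OF \<open>n \<le> m\<close>] ppd[of n n] Td[of n] by auto
    then show "(norm (pp m - pp n))\<^sup>2 \<le> 8 / (real n + 1)" by simp
  qed
  then obtain w where w: "pp \<longlonglongrightarrow> w" using Cauchy_convergent_iff convergent_def by blast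
  have "norm (w - N x) \<le> norm (z - x)" if x: "x \<in> D" for x
  proof -
    have TX: "finite (insert x (T n))" "insert x (T n) \<subseteq> D" for n using T x by auto
    have "\<exists>q\<in>G (insert x (T n)). (norm q)\<^sup>2 < \<delta> (insert x (T n)) + 1 / (real n + 1)" for n
      using \<delta>lt[OF TX] by simp
    then obtain qq where qq: "\<And>n. qq n \<in> G (insert x (T n)) \<and> (norm (qq n))\<^sup>2 < \<delta> (insert x (T n)) + 1 / (real n + 1)" by metis
    have qqT: "qq n \<in> G (T n)" for n using qq[of n] Gmono[of "T n" "insert x (T n)"] by auto
    have qqd: "(norm (qq n))\<^sup>2 \<le> d + 1 / (real n + 1)" for n
      using qq[of n] \<delta>d[OF TX, of n] by linarith
    have dist: "(norm (qq n - pp n))\<^sup>2 \<le> 8 * (1 / (real n + 1))" for n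
      using key[where S="T n" and p="qq n" and q="pp n" and e="1 / (real n + 1)", OF T(1) T(2) qqT] pp[of n] qqd[of n] ppd[of n n] Td[of n] by auto
    have "(\<lambda>n. qq n - pp n) \<longlonglongrightarrow> 0"
    proof (rule Lim_null_comparison)
      show "\<forall>\<^sub>F n in sequentially. norm (qq n - pp n) \<le> sqrt (8 * (1 / (real n + 1)))"
        using dist by (intro always_eventually allI real_le_rsqrt)
      have "(\<lambda>n. sqrt (8 * (1 / (real n + 1)))) \<longlonglongrightarrow> sqrt (8 * 0)"
        by (intro tendsto_intros lim_n1)
      then show "(\<lambda>n. sqrt (8 * (1 / (real n + 1)))) \<longlonglongrightarrow> 0" by simp
    qed
    then have "(\<lambda>n. pp n + (qq n - pp n)) \<longlonglongrightarrow> w + 0" by (intro tendsto_intros w)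
    then have qw: "qq \<longlonglongrightarrow> w" by simp
    have "(\<lambda>n. norm (qq n - N x)) \<longlonglongrightarrow> norm (w - N x)" by (intro tendsto_intros qw)
    moreover have "norm (qq n - N x) \<le> norm (z - x)" for n using qq[of n] by (auto simp: G_def)
    ultimately show ?thesis by (intro LIMSEQ_le_const2) auto
  qed
  then show ?thesis by auto
qed

lemma gra_A: "gra (minus_Id (inv_op D T)) = {(T x, x - T x) | x. x \<in> D}"
  by (auto simp: gra_def minus_Id_def inv_op_def)

lemma real_equiv:
  fixes \<alpha> tt ta aa :: real
  assumes "0 < \<alpha>"
  shows "((tt - 2*(1-\<alpha>)*ta + (1-\<alpha>)\<^sup>2*aa)/\<alpha>\<^sup>2 \<le> aa) \<longleftrightarrow> ((1/(2*\<alpha>) - 1) * (aa - 2*ta + tt) \<le> ta - tt)"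
proof -
  have l: "((tt - 2*(1-\<alpha>)*ta + (1-\<alpha>)\<^sup>2*aa)/\<alpha>\<^sup>2 \<le> aa) \<longleftrightarrow> tt - 2*(1-\<alpha>)*ta + (1-\<alpha>)\<^sup>2*aa \<le> \<alpha>\<^sup>2 * aa"
    using assms by (simp add: pos_divide_le_eq mult.commute)
  have r0: "(1/(2*\<alpha>) - 1) * (aa - 2*ta + tt) = ((1 - 2*\<alpha>) * (aa - 2*ta + tt)) / (2*\<alpha>)"
    using assms by (simp add: field_simps)
  have r: "((1/(2*\<alpha>) - 1) * (aa - 2*ta + tt) \<le> ta - tt) \<longleftrightarrow> (1 - 2*\<alpha>) * (aa - 2*ta + tt) \<le> 2*\<alpha>*(ta - tt)"
    unfolding r0 using assms by (simp add: pos_divide_le_eq mult.commute)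
  have id: "\<alpha>\<^sup>2 * aa - (tt - 2*(1-\<alpha>)*ta + (1-\<alpha>)\<^sup>2*aa) = 2*\<alpha>*(ta - tt) - (1 - 2*\<alpha>) * (aa - 2*ta + tt)"
    by (simp add: algebra_simps power2_eq_square)
  show ?thesis unfolding l r using id by linarith
qed

lemma pointwise:
  fixes x y tx ty :: "'a::real_inner"
  assumes "0 < \<alpha>"
  shows "norm ((1/\<alpha>) *\<^sub>R (tx - (1-\<alpha>) *\<^sub>R x) - (1/\<alpha>) *\<^sub>R (ty - (1-\<alpha>) *\<^sub>R y)) \<le> norm (x - y)
    \<longleftrightarrow> (1/(2*\<alpha>) - 1) * (norm ((x - tx) - (y - ty)))\<^sup>2 \<le> inner (tx - ty) ((x - tx) - (y - ty))"
proof -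
  define a where "a = x - y"
  define t where "t = tx - ty"
  have v: "(1/\<alpha>) *\<^sub>R (tx - (1-\<alpha>) *\<^sub>R x) - (1/\<alpha>) *\<^sub>R (ty - (1-\<alpha>) *\<^sub>R y) = (1/\<alpha>) *\<^sub>R (t - (1-\<alpha>) *\<^sub>R a)"
    by (simp add: a_def t_def algebra_simps)
  have w: "(x - tx) - (y - ty) = a - t" by (simp add: a_def t_def)
  have n1: "(norm ((1/\<alpha>) *\<^sub>R (t - (1-\<alpha>) *\<^sub>R a)))\<^sup>2 = (inner t t - 2*(1-\<alpha>)*inner t a + (1-\<alpha>)\<^sup>2*inner a a)/\<alpha>\<^sup>2"
    unfolding power2_norm_eq_inner
    by (simp add: inner_diff_left inner_diff_right inner_commute algebra_simps power2_eq_square divide_simps)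
  have n2: "(norm (a - t))\<^sup>2 = inner a a - 2 * inner t a + inner t t"
    unfolding power2_norm_eq_inner by (simp add: inner_diff_left inner_diff_right inner_commute)
  have n3: "inner t (a - t) = inner t a - inner t t" by (simp add: inner_diff_right)
  have sq: "norm ((1/\<alpha>) *\<^sub>R (t - (1-\<alpha>) *\<^sub>R a)) \<le> norm a \<longleftrightarrow> (norm ((1/\<alpha>) *\<^sub>R (t - (1-\<alpha>) *\<^sub>R a)))\<^sup>2 \<le> (norm a)\<^sup>2"
    by (simp add: abs_le_square_iff[symmetric])
  show ?thesis
    unfolding v w a_def[symmetric] t_def[symmetric] sq n1 n2 n3 power2_norm_eq_inner[of a]
    using real_equiv[OF assms] by simp
qed

lemma como_iff:
  "comonotone \<rho> (minus_Id (inv_op D T)) \<longleftrightarrow>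
    (\<forall>x\<in>D. \<forall>y\<in>D. \<rho> * (norm ((x - T x) - (y - T y)))\<^sup>2 \<le> inner (T x - T y) ((x - T x) - (y - T y)))"
  unfolding comonotone_def gra_A by blast

lemma conic_iff:
  assumes "0 < \<alpha>"
  shows "conically_nonexpansive_on \<alpha> D T \<longleftrightarrow> nonexpansive_on D (\<lambda>x. (1/\<alpha>) *\<^sub>R (T x - (1-\<alpha>) *\<^sub>R x))"
proof
  assume "conically_nonexpansive_on \<alpha> D T"
  then obtain N where N: "nonexpansive_on D N" "\<forall>x\<in>D. T x = (1 - \<alpha>) *\<^sub>R x + \<alpha> *\<^sub>R N x"
    unfolding conically_nonexpansive_on_def by blast
  have "(1/\<alpha>) *\<^sub>R (T x - (1-\<alpha>) *\<^sub>R x) = N x" if "x \<in> D" for x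
    using N(2) that assms by simp
  then show "nonexpansive_on D (\<lambda>x. (1/\<alpha>) *\<^sub>R (T x - (1-\<alpha>) *\<^sub>R x))"
    using N(1) unfolding nonexpansive_on_def by simp
next
  assume "nonexpansive_on D (\<lambda>x. (1/\<alpha>) *\<^sub>R (T x - (1-\<alpha>) *\<^sub>R x))"
  moreover have "\<forall>x\<in>D. T x = (1 - \<alpha>) *\<^sub>R x + \<alpha> *\<^sub>R ((1/\<alpha>) *\<^sub>R (T x - (1-\<alpha>) *\<^sub>R x))"
    using assms by simp
  ultimately show "conically_nonexpansive_on \<alpha> D T"
    unfolding conically_nonexpansive_on_def using assms by blast
qed

lemma L_equiv:
  fixes T :: "'a::real_inner \<Rightarrow> 'a"
  assumes "0 < \<alpha>"
  shows "conically_nonexpansive_on \<alpha> D T \<longleftrightarrow> comonotone (1/(2*\<alpha>) - 1) (minus_Id (inv_op D T))"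
  unfolding conic_iff[OF assms] como_iff nonexpansive_on_def pointwise[OF assms] ..

lemma M_equiv:
  fixes T :: "'a::{real_inner,complete_space} \<Rightarrow> 'a"
  assumes a: "0 < \<alpha>"
  shows "(conically_nonexpansive_on \<alpha> D T \<and> D = UNIV) \<longleftrightarrow> maximally_comonotone (1/(2*\<alpha>) - 1) (minus_Id (inv_op D T))"
proof -
  define \<rho> where "\<rho> = 1/(2*\<alpha>) - 1"
  have \<rho>: "-1 < \<rho>" using a by (simp add: \<rho>_def)
  show ?thesis unfolding \<rho>_def[symmetric]
  proof
    assume H: "conically_nonexpansive_on \<alpha> D T \<and> D = UNIV"
    then have C: "comonotone \<rho> (minus_Id (inv_op D T))" using L_equiv[OF a, of D T] unfolding \<rho>_def by blast
    have "\<not> (\<exists>B. comonotone \<rho> B \<and> gra (minus_Id (inv_op D T)) \<subset> gra B)"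
    proof
      assume "\<exists>B. comonotone \<rho> B \<and> gra (minus_Id (inv_op D T)) \<subset> gra B"
      then obtain B where B: "comonotone \<rho> B" "gra (minus_Id (inv_op D T)) \<subset> gra B" by blast
      then obtain p u where pu: "(p, u) \<in> gra B" "(p, u) \<notin> gra (minus_Id (inv_op D T))" by auto
      define x where "x = p + u"
      have "(T x, x - T x) \<in> gra (minus_Id (inv_op D T))" using H unfolding gra_A by auto
      then have xB: "(T x, x - T x) \<in> gra B" using B(2) by auto
      have "\<rho> * (norm (p - T x))\<^sup>2 \<le> - (norm (p - T x))\<^sup>2"
      proof -
        have e1: "u - (x - T x) = - (p - T x)" by (simp add: x_def algebra_simps)
        have "\<rho> * (norm (u - (x - T x)))\<^sup>2 \<le> inner (p - T x) (u - (x - T x))"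
          using B(1) pu(1) xB unfolding comonotone_def by blast
        then show ?thesis unfolding e1 norm_minus_cancel inner_minus_right by (simp add: power2_norm_eq_inner)
      qed
      then have "(1 + \<rho>) * (norm (p - T x))\<^sup>2 \<le> 0" by (simp add: algebra_simps)
      then have "(norm (p - T x))\<^sup>2 \<le> 0" using \<rho> by (simp add: mult_le_0_iff)
      then have "p = T x" by simp
      then have "(p, u) = (T x, x - T x)" by (simp add: x_def)
      then show False using pu(2) H unfolding gra_A by auto
    qed
    with C show "maximally_comonotone \<rho> (minus_Id (inv_op D T))" unfolding maximally_comonotone_def by blast
  next
    assume H: "maximally_comonotone \<rho> (minus_Id (inv_op D T))"
    then have C: "conically_nonexpansive_on \<alpha> D T" using L_equiv[OF a, of D T]
      unfolding \<rho>_def maximally_comonotone_def by blast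
    have "D = UNIV"
    proof (rule ccontr)
      assume "D \<noteq> UNIV"
      then obtain z where z: "z \<notin> D" by auto
      define N where "N x = (1/\<alpha>) *\<^sub>R (T x - (1-\<alpha>) *\<^sub>R x)" for x
      have Nne: "nonexpansive_on D N" using C conic_iff[OF a, of D T] unfolding N_def[abs_def] by blast
      then obtain w where w: "\<forall>x\<in>D. norm (w - N x) \<le> norm (z - x)"
        using kirsz[of D N z] unfolding nonexpansive_on_def by blast
      define D' where "D' = insert z D"
      define T' where "T' = T(z := (1-\<alpha>) *\<^sub>R z + \<alpha> *\<^sub>R w)"
      define N' where "N' = N(z := w)"
      have "nonexpansive_on D' N'"
        unfolding nonexpansive_on_def
      proof (intro ballI)
        fix x y assume "x \<in> D'" "y \<in> D'"
        then show "norm (N' x - N' y) \<le> norm (x - y)"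
          using Nne w z unfolding D'_def N'_def nonexpansive_on_def
          by (cases "x = z"; cases "y = z") (auto simp: norm_minus_commute)
      qed
      moreover have "\<forall>x\<in>D'. T' x = (1 - \<alpha>) *\<^sub>R x + \<alpha> *\<^sub>R N' x"
        using a z by (auto simp: D'_def T'_def N'_def N_def)
      ultimately have "conically_nonexpansive_on \<alpha> D' T'"
        unfolding conically_nonexpansive_on_def using a by blast
      then have CB: "comonotone \<rho> (minus_Id (inv_op D' T'))" using L_equiv[OF a, of D' T'] unfolding \<rho>_def by blast
      have sub: "gra (minus_Id (inv_op D T)) \<subseteq> gra (minus_Id (inv_op D' T'))"
        unfolding gra_A D'_def T'_def using z by force
      have new: "(T' z, z - T' z) \<in> gra (minus_Id (inv_op D' T'))" unfolding gra_A D'_def by auto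
      have notold: "(T' z, z - T' z) \<notin> gra (minus_Id (inv_op D T))"
      proof
        assume "(T' z, z - T' z) \<in> gra (minus_Id (inv_op D T))"
        then obtain x where "x \<in> D" "T' z = T x" "z - T' z = x - T x" unfolding gra_A by auto
        then have "z = x" by (metis diff_add_cancel)
        then show False using z \<open>x \<in> D\<close> by simp
      qed
      have "comonotone \<rho> (minus_Id (inv_op D' T')) \<and> gra (minus_Id (inv_op D T)) \<subset> gra (minus_Id (inv_op D' T'))"
        using CB sub new notold by blast
      then show False using H unfolding maximally_comonotone_def by blast
    qed
    with C show "conically_nonexpansive_on \<alpha> D T \<and> D = UNIV" by simp
  qed
qed

lemma nonexp_conic1: "nonexpansive_on D T \<longleftrightarrow> conically_nonexpansive_on 1 D T"
  using conic_iff[of 1 D T] by simp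

lemma avg_conic: "\<alpha> < 1 \<Longrightarrow> averaged_on \<alpha> D T \<longleftrightarrow> conically_nonexpansive_on \<alpha> D T"
  unfolding averaged_on_def conically_nonexpansive_on_def by blast

theorem proposition3p9:
  fixes D :: "'a::{real_inner, complete_space} set"
    and T :: "'a \<Rightarrow> 'a"
    and A :: "'a \<Rightarrow> 'a set"
    and \<alpha> \<rho> :: real
  assumes "D \<noteq> {}"
    and "0 < \<alpha>"
    and "A = minus_Id (inv_op D T)"
    and "\<rho> = 1 / (2 * \<alpha>) - 1"
  shows "(conically_nonexpansive_on \<alpha> D T \<longleftrightarrow> comonotone \<rho> A)
    \<and> ((conically_nonexpansive_on \<alpha> D T \<and> D = UNIV) \<longleftrightarrow> maximally_comonotone \<rho> A)
    \<and> (nonexpansive_on D T \<longleftrightarrow> comonotone (-1/2) A)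
    \<and> ((nonexpansive_on D T \<and> D = UNIV) \<longleftrightarrow> maximally_comonotone (-1/2) A)
    \<and> (\<alpha> < 1 \<longrightarrow>
         (averaged_on \<alpha> D T \<longleftrightarrow> comonotone \<rho> A)
       \<and> ((averaged_on \<alpha> D T \<and> D = UNIV) \<longleftrightarrow> maximally_comonotone \<rho> A))"
proof -
  have h: "-1/2 = 1 / (2 * (1::real)) - 1" by simp
  have i: "conically_nonexpansive_on \<alpha> D T \<longleftrightarrow> comonotone \<rho> A"
    using L_equiv[OF assms(2), of D T] assms(3,4) by simp
  have ii: "(conically_nonexpansive_on \<alpha> D T \<and> D = UNIV) \<longleftrightarrow> maximally_comonotone \<rho> A"
    using M_equiv[OF assms(2), of D T] assms(3,4) by simp
  have iii: "nonexpansive_on D T \<longleftrightarrow> comonotone (-1/2) A"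
    unfolding nonexp_conic1 h assms(3) by (rule L_equiv) simp
  have iv: "(nonexpansive_on D T \<and> D = UNIV) \<longleftrightarrow> maximally_comonotone (-1/2) A"
    unfolding nonexp_conic1 h assms(3) by (rule M_equiv) simp
  show ?thesis using i ii iii iv avg_conic[of \<alpha> D T] by blast
qed

end
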